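(* Fix $\beta>0$, $d\ge1$, and a finite nonempty index set $T$. For each $t\in T$ and $j\in\{1,\dots,d\}$ let $\mu^{t,\mathrm{lo}}_j,\mu^{t,\mathrm{hi}}_j\in\mathbb{R}$, and let $L^t_j\sim\mathrm{MaxGumbel}(\mu^{t,\mathrm{lo}}_j,\beta)$ and $U^t_j\sim\mathrm{MinGumbel}(\mu^{t,\mathrm{hi}}_j,\beta)$, all of these $2d|T|$ random variables being mutually independent. Consider the random boxes $B^t=\prod_{j=1}^d[L^t_j,U^t_j]$ and the Lebesgue volume of their intersection, $V=\prod_{j=1}^d\max\big(\min_{t\in T}U^t_j-\max_{t\in T}L^t_j,\,0\big)$. Then $$\mathbb{E}[V]=\prod_{j=1}^d m\!\left(-\beta\,\mathrm{LogSumExp}_{t\in T}\!\Big(-\tfrac{\mu^{t,\mathrm{hi}}_j}{\beta}\Big)-\beta\,\mathrm{LogSumExp}_{t\in T}\!\Big(\tfrac{\mu^{t,\mathrm{lo}}_j}{\beta}\Big)\right),$$ where $m(x)=2\beta K_0\!\left(2e^{-x/(2\beta)}\right)$.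
   Context: $\mathrm{MaxGumbel}(\mu,\beta)$ denotes the distribution on $\mathbb{R}$ with density $\frac1\beta\exp\!\big(-\tfrac{x-\mu}{\beta}-e^{-(x-\mu)/\beta}\big)$; $\mathrm{MinGumbel}(\mu,\beta)$ denotes the distribution with density $\frac1\beta\exp\!\big(\tfrac{x-\mu}{\beta}-e^{(x-\mu)/\beta}\big)$. $\mathrm{LogSumExp}_{t\in T}(a_t)=\ln\sum_{t\in T}e^{a_t}$. $K_0$ is the modified Bessel function of the second kind of order $0$, $K_0(z)=\int_0^\infty e^{-z\cosh s}\,ds$. *)

theory Defs
  imports "HOL-Probability.Probability"
begin

definition maxgumbel_density :: "real \<Rightarrow> real \<Rightarrow> real \<Rightarrow> real" where
  "maxgumbel_density mu beta x = (1 / beta) * exp (- ((x - mu) / beta) - exp (- ((x - mu) / beta)))"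

definition mingumbel_density :: "real \<Rightarrow> real \<Rightarrow> real \<Rightarrow> real" where
  "mingumbel_density mu beta x = (1 / beta) * exp ((x - mu) / beta - exp ((x - mu) / beta))"

definition LogSumExp :: "'t set \<Rightarrow> ('t \<Rightarrow> real) \<Rightarrow> real" where
  "LogSumExp T a = ln (\<Sum>t\<in>T. exp (a t))"

definition BesselK0 :: "real \<Rightarrow> real" where
  "BesselK0 z = (LBINT s:{0..}. exp (- (z * cosh s)))"

definition gumbel_box_m :: "real \<Rightarrow> real \<Rightarrow> real" where
  "gumbel_box_m beta x = 2 * beta * BesselK0 (2 * exp (- x / (2 * beta)))"

end

theory Submission
  imports Defs "HOL-Real_Asymp.Real_Asymp"
begin


lemma mingumbel_tail:
  fixes mu beta a :: real assumes b: "beta > 0"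
  shows "(\<integral>\<^sup>+x. ennreal (mingumbel_density mu beta x) * indicator {a..} x \<partial>lborel)
         = ennreal (exp (- exp ((a - mu) / beta)))"
proof -
  have "(\<integral>\<^sup>+x. ennreal (mingumbel_density mu beta x) * indicator {a..} x \<partial>lborel)
        = ennreal (0 - (- exp (- exp ((a - mu) / beta))))"
  proof (rule nn_integral_FTC_atLeast)
    show "mingumbel_density mu beta \<in> borel_measurable borel"
      unfolding mingumbel_density_def by measurable
    fix x :: real
    show "0 \<le> mingumbel_density mu beta x" using b unfolding mingumbel_density_def by simp
    have "((\<lambda>x. - exp (- exp ((x - mu) / beta))) has_real_derivative
           (- (exp (- exp ((x - mu) / beta)) * (- (exp ((x - mu) / beta) * (1 / beta)))))) (at x)"
      using b by (auto intro!: derivative_eq_intros)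
    moreover have "(- (exp (- exp ((x - mu) / beta)) * (- (exp ((x - mu) / beta) * (1 / beta)))))
        = mingumbel_density mu beta x"
      unfolding mingumbel_density_def using b by (simp add: exp_diff exp_minus field_simps exp_add[symmetric])
    ultimately show "((\<lambda>x. - exp (- exp ((x - mu) / beta))) has_real_derivative mingumbel_density mu beta x) (at x)"
      by simp
  next
    show "((\<lambda>x. - exp (- exp ((x - mu) / beta))) \<longlongrightarrow> 0) at_top"
      using b by real_asymp
  qed
  then show ?thesis by simp
qed

lemma maxgumbel_cdf:
  fixes mu beta a :: real assumes b: "beta > 0"
  shows "(\<integral>\<^sup>+x. ennreal (maxgumbel_density mu beta x) * indicator {..a} x \<partial>lborel)
         = ennreal (exp (- exp (- (a - mu) / beta)))"
proof -
  have "(\<integral>\<^sup>+x. ennreal (maxgumbel_density mu beta x) * indicator {..a} x \<partial>lborel)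
     = ennreal \<bar>-1\<bar> * (\<integral>\<^sup>+x. ennreal (maxgumbel_density mu beta (0 + -1 * x)) * indicator {..a} (0 + -1 * x) \<partial>lborel)"
    by (rule nn_integral_real_affine) (auto simp: maxgumbel_density_def)
  also have "\<dots> = (\<integral>\<^sup>+x. ennreal (mingumbel_density (-mu) beta x) * indicator {-a..} x \<partial>lborel)"
    by (auto intro!: nn_integral_cong simp: maxgumbel_density_def mingumbel_density_def indicator_def minus_divide_left add.commute)
  also have "\<dots> = ennreal (exp (- exp (- (a - mu) / beta)))"
    using mingumbel_tail[OF b] by (simp add: minus_divide_left)
  finally show ?thesis .
qed


lemma even_split:
  fixes f :: "real \<Rightarrow> ennreal"
  assumes [measurable]: "f \<in> borel_measurable borel" and ev: "\<And>x. f (-x) = f x"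
  shows "(\<integral>\<^sup>+x. f x \<partial>lborel) = 2 * (\<integral>\<^sup>+x. f x * indicator {0..} x \<partial>lborel)"
proof -
  have "(\<integral>\<^sup>+x. f x \<partial>lborel) = (\<integral>\<^sup>+x. f x * indicator {0..} x + f x * indicator {..<0} x \<partial>lborel)"
    by (intro nn_integral_cong) (auto simp: indicator_def)
  also have "\<dots> = (\<integral>\<^sup>+x. f x * indicator {0..} x \<partial>lborel) + (\<integral>\<^sup>+x. f x * indicator {..<0} x \<partial>lborel)"
    by (rule nn_integral_add) auto
  also have "(\<integral>\<^sup>+x. f x * indicator {..<0} x \<partial>lborel)
      = ennreal \<bar>-1\<bar> * (\<integral>\<^sup>+x. f (0 + -1 * x) * indicator {..<0} (0 + -1 * x) \<partial>lborel)"
    by (rule nn_integral_real_affine) auto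
  also have "\<dots> = (\<integral>\<^sup>+x. f x * indicator {0<..} x \<partial>lborel)"
    by (auto intro!: nn_integral_cong simp: ev indicator_def)
  also have "\<dots> = (\<integral>\<^sup>+x. f x * indicator {0..} x \<partial>lborel)"
    by (intro nn_integral_cong_AE eventually_mono[OF AE_lborel_singleton[of 0]])
       (auto simp: indicator_def)
  finally show ?thesis by (simp add: mult_2)
qed

lemma K0_nn:
  fixes z :: real assumes z: "z > 0"
  shows "(\<integral>\<^sup>+u. ennreal (exp (- (z * cosh u))) * indicator {0..} u \<partial>lborel) = ennreal (BesselK0 z)"
proof -
  let ?g = "\<lambda>u. indicator {0..} u *\<^sub>R exp (- (z * cosh u))"
  have [measurable]: "(cosh :: real \<Rightarrow> real) \<in> borel_measurable borel"
  proof -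
    have "(cosh :: real \<Rightarrow> real) = (\<lambda>x. (exp x + exp (-x)) / 2)" by (auto simp: cosh_field_def)
    moreover have "(\<lambda>x::real. (exp x + exp (-x)) / 2) \<in> borel_measurable borel" by measurable
    ultimately show ?thesis by simp
  qed
  have eq: "(\<integral>\<^sup>+u. ennreal (exp (- (z * cosh u))) * indicator {0..} u \<partial>lborel) = (\<integral>\<^sup>+u. ennreal (?g u) \<partial>lborel)"
    by (intro nn_integral_cong) (auto simp: indicator_def)
  have bnd: "exp (- (z * cosh u)) \<le> exp (- (z/2) * (1 + u))" for u
  proof -
    have "exp u \<ge> 1 + u" by (rule exp_ge_add_one_self)
    moreover have "exp (-u) > 0" by simp
    ultimately have "1 + u \<le> exp u + exp (-u)" by linarith
    then have "cosh u \<ge> (1 + u) / 2" unfolding cosh_field_def by (simp add: divide_right_mono)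
    then have "z * cosh u \<ge> z * ((1 + u)/2)" using z by (intro mult_left_mono) auto
    then show ?thesis by (simp add: field_simps)
  qed
  have "(\<integral>\<^sup>+u. ennreal (exp (- (z/2) * (1 + u))) * indicator {0..} u \<partial>lborel)
        = ennreal (0 - (- (2/z) * exp (- (z/2) * (1 + 0))))"
  proof (rule nn_integral_FTC_atLeast)
    show "(\<lambda>u. exp (- (z/2) * (1 + u))) \<in> borel_measurable borel" by measurable
    fix x :: real
    show "0 \<le> exp (- (z/2) * (1 + x))" by simp
    show "((\<lambda>u. - (2/z) * exp (- (z/2) * (1 + u))) has_real_derivative exp (- (z/2) * (1 + x))) (at x)"
      using z by (auto intro!: derivative_eq_intros)
  next
    show "((\<lambda>u. - (2/z) * exp (- (z/2) * (1 + u))) \<longlongrightarrow> 0) at_top" using z by real_asymp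
  qed
  then have fin: "(\<integral>\<^sup>+u. ennreal (exp (- (z/2) * (1 + u))) * indicator {0..} u \<partial>lborel) < \<infinity>" by simp
  have "(\<integral>\<^sup>+u. ennreal (norm (?g u)) \<partial>lborel) \<le> (\<integral>\<^sup>+u. ennreal (exp (- (z/2) * (1 + u))) * indicator {0..} u \<partial>lborel)"
  proof (intro nn_integral_mono)
    fix u
    show "ennreal (norm (?g u)) \<le> ennreal (exp (- (z/2) * (1 + u))) * indicator {0..} u"
      using bnd[of u] by (cases "u \<ge> 0") (auto simp: indicator_def simp del: exp_le_cancel_iff)
  qed
  with fin have "integrable lborel ?g"
    by (intro integrableI_bounded) (auto, measurable)
  then have "(\<integral>\<^sup>+u. ennreal (?g u) \<partial>lborel) = ennreal (integral\<^sup>L lborel ?g)"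
    by (intro nn_integral_eq_integral) auto
  then show ?thesis using eq by (simp add: BesselK0_def set_lebesgue_integral_def)
qed


lemma BesselK0_nonneg: "BesselK0 z \<ge> 0"
  unfolding BesselK0_def set_lebesgue_integral_def by (intro Bochner_Integration.integral_nonneg) (auto simp: indicator_def)

lemma box_integral:
  fixes a b beta :: real assumes bpos: "beta > 0"
  shows "(\<integral>\<^sup>+s. ennreal (exp (- exp (- (s - a) / beta)) * exp (- exp ((s - b) / beta))) \<partial>lborel)
       = ennreal (gumbel_box_m beta (b - a))"
proof -
  define z where "z = 2 * exp (- (b - a) / (2 * beta))"
  have zpos: "z > 0" unfolding z_def by simp
  let ?F = "\<lambda>s. ennreal (exp (- exp (- (s - a) / beta)) * exp (- exp ((s - b) / beta)))"
  have "(\<integral>\<^sup>+s. ?F s \<partial>lborel) = ennreal \<bar>beta\<bar> * (\<integral>\<^sup>+u. ?F ((a+b)/2 + beta * u) \<partial>lborel)"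
    by (rule nn_integral_real_affine) (use bpos in auto)
  also have "(\<integral>\<^sup>+u. ?F ((a+b)/2 + beta * u) \<partial>lborel) = (\<integral>\<^sup>+u. ennreal (exp (- (z * cosh u))) \<partial>lborel)"
  proof (intro nn_integral_cong)
    fix u :: real
    have e1: "- ((a+b)/2 + beta * u - a) / beta = - (b - a) / (2 * beta) + - u"
      using bpos by (simp add: field_simps)
    have e2: "((a+b)/2 + beta * u - b) / beta = - (b - a) / (2 * beta) + u"
      using bpos by (simp add: field_simps)
    have "exp (- exp (- ((a+b)/2 + beta * u - a) / beta)) * exp (- exp (((a+b)/2 + beta * u - b) / beta))
        = exp (- (exp (- (b - a) / (2 * beta)) * exp (-u) + exp (- (b - a) / (2 * beta)) * exp u))"
      unfolding e1 e2 exp_add by (simp add: exp_add[symmetric])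
    also have "\<dots> = exp (- (z * cosh u))"
      unfolding z_def cosh_field_def by (simp add: field_simps)
    finally show "?F ((a+b)/2 + beta * u) = ennreal (exp (- (z * cosh u)))" by simp
  qed
  also have "(\<integral>\<^sup>+u. ennreal (exp (- (z * cosh u))) \<partial>lborel)
      = 2 * (\<integral>\<^sup>+u. ennreal (exp (- (z * cosh u))) * indicator {0..} u \<partial>lborel)"
  proof (rule even_split)
    have [measurable]: "(cosh :: real \<Rightarrow> real) \<in> borel_measurable borel"
    proof -
      have "(cosh :: real \<Rightarrow> real) = (\<lambda>x. (exp x + exp (-x)) / 2)" by (auto simp: cosh_field_def)
      moreover have "(\<lambda>x::real. (exp x + exp (-x)) / 2) \<in> borel_measurable borel" by measurable
      ultimately show ?thesis by simp
    qed
    show "(\<lambda>u. ennreal (exp (- (z * cosh u)))) \<in> borel_measurable borel" by measurable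
  qed simp
  also have "\<dots> = 2 * ennreal (BesselK0 z)" using K0_nn[OF zpos] by simp
  finally have "(\<integral>\<^sup>+s. ?F s \<partial>lborel) = ennreal beta * (2 * ennreal (BesselK0 z))"
    using bpos by simp
  also have "\<dots> = ennreal (2 * beta * BesselK0 z)"
  proof -
    have "ennreal (2 * beta * BesselK0 z) = ennreal beta * ennreal (2 * BesselK0 z)"
      using bpos BesselK0_nonneg[of z] by (subst ennreal_mult[symmetric]) (auto simp: mult_ac)
    also have "ennreal (2 * BesselK0 z) = 2 * ennreal (BesselK0 z)"
      using BesselK0_nonneg[of z] by (simp add: ennreal_mult)
    finally show ?thesis by simp
  qed
  also have "\<dots> = ennreal (gumbel_box_m beta (b - a))"
    unfolding gumbel_box_m_def z_def by simp
  finally show ?thesis .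
qed


lemma prod_if01:
  assumes "finite T"
  shows "(\<Prod>t\<in>T. (if P t then 1 else (0::ennreal))) = (if \<forall>t\<in>T. P t then 1 else 0)"
proof (cases "\<forall>t\<in>T. P t")
  case True then show ?thesis by simp
next
  case False
  then obtain t where "t \<in> T" "\<not> P t" by blast
  then show ?thesis using assms False by (intro trans[OF prod_zero]) auto
qed

lemma sum_exp_shift:
  fixes m :: "'t \<Rightarrow> real"
  assumes T: "finite T" "T \<noteq> {}" and bpos: "beta > 0"
  shows "(\<Sum>t\<in>T. exp ((y - m t) / beta)) = exp ((y - (- beta * LogSumExp T (\<lambda>t. - m t / beta))) / beta)"
proof -
  have S: "(\<Sum>t\<in>T. exp (- m t / beta)) > 0" using T by (intro sum_pos) auto
  have "(y - (- beta * LogSumExp T (\<lambda>t. - m t / beta))) / beta = y / beta + ln (\<Sum>t\<in>T. exp (- m t / beta))"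
    using bpos unfolding LogSumExp_def by (simp add: field_simps)
  then have "exp ((y - (- beta * LogSumExp T (\<lambda>t. - m t / beta))) / beta) = exp (y / beta) * (\<Sum>t\<in>T. exp (- m t / beta))"
    using S by (simp add: exp_add)
  also have "\<dots> = (\<Sum>t\<in>T. exp ((y - m t) / beta))"
    by (simp add: sum_distrib_left exp_add[symmetric] diff_divide_distrib)
  finally show ?thesis by simp
qed

lemma prod_maxg:
  fixes m :: "'t \<Rightarrow> real"
  assumes T: "finite T" "T \<noteq> {}" and bpos: "beta > 0"
  shows "(\<Prod>t\<in>T. exp (- exp (- (x - m t) / beta))) = exp (- exp (- (x - beta * LogSumExp T (\<lambda>t. m t / beta)) / beta))"
proof -
  have "(\<Prod>t\<in>T. exp (- exp (- (x - m t) / beta))) = exp (\<Sum>t\<in>T. - exp (- (x - m t) / beta))"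
    by (simp add: exp_sum T)
  also have "(\<Sum>t\<in>T. - exp (- (x - m t) / beta)) = - (\<Sum>t\<in>T. exp (((-x) - (- m t)) / beta))"
    by (simp add: sum_negf)
  also have "(\<Sum>t\<in>T. exp (((-x) - (- m t)) / beta)) = exp (((-x) - (- beta * LogSumExp T (\<lambda>t. - (- m t) / beta))) / beta)"
    by (rule sum_exp_shift[OF T bpos])
  also have "\<dots> = exp (- (x - beta * LogSumExp T (\<lambda>t. m t / beta)) / beta)"
    by (simp add: field_simps)
  finally show ?thesis .
qed

lemma prod_ming:
  fixes m :: "'t \<Rightarrow> real"
  assumes T: "finite T" "T \<noteq> {}" and bpos: "beta > 0"
  shows "(\<Prod>t\<in>T. exp (- exp ((x - m t) / beta))) = exp (- exp ((x - (- beta * LogSumExp T (\<lambda>t. - m t / beta))) / beta))"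
proof -
  have "(\<Prod>t\<in>T. exp (- exp ((x - m t) / beta))) = exp (\<Sum>t\<in>T. - exp ((x - m t) / beta))"
    by (simp add: exp_sum T)
  also have "\<dots> = exp (- (\<Sum>t\<in>T. exp ((x - m t) / beta)))" by (simp add: sum_negf)
  also have "(\<Sum>t\<in>T. exp ((x - m t) / beta)) = exp ((x - (- beta * LogSumExp T (\<lambda>t. - m t / beta))) / beta)"
    by (rule sum_exp_shift[OF T bpos])
  finally show ?thesis .
qed


lemma Ball_Plus_prod:
  "(\<forall>i\<in>(T \<times> J) <+> (T \<times> J). P i) \<longleftrightarrow> (\<forall>j\<in>J. \<forall>t\<in>T. P (Inl (t, j)) \<and> P (Inr (t, j)))"
  by auto

theorem mainTheorem3:
  fixes M :: "'a measure" and T :: "'t set" and d :: nat and beta :: real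
    and mulo muhi :: "'t \<Rightarrow> nat \<Rightarrow> real"
    and L U :: "'t \<Rightarrow> nat \<Rightarrow> 'a \<Rightarrow> real"
  assumes "prob_space M"
    and "beta > 0" and "d \<ge> 1" and "finite T" and "T \<noteq> {}"
    and "\<And>t j. t \<in> T \<Longrightarrow> j \<in> {1..d} \<Longrightarrow>
           distributed M lborel (L t j) (\<lambda>x. ennreal (maxgumbel_density (mulo t j) beta x))"
    and "\<And>t j. t \<in> T \<Longrightarrow> j \<in> {1..d} \<Longrightarrow>
           distributed M lborel (U t j) (\<lambda>x. ennreal (mingumbel_density (muhi t j) beta x))"
    and "prob_space.indep_vars M (\<lambda>_. borel)
           (\<lambda>i. case i of Inl (t, j) \<Rightarrow> L t j | Inr (t, j) \<Rightarrow> U t j)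
           ((T \<times> {1..d}) <+> (T \<times> {1..d}))"
  shows "(\<integral>\<^sup>+ \<omega>. ennreal (\<Prod>j\<in>{1..d}.
             max (Min ((\<lambda>t. U t j \<omega>) ` T) - Max ((\<lambda>t. L t j \<omega>) ` T)) 0) \<partial>M)
         = ennreal (\<Prod>j\<in>{1..d}. gumbel_box_m beta
             (- beta * LogSumExp T (\<lambda>t. - muhi t j / beta)
              - beta * LogSumExp T (\<lambda>t. mulo t j / beta)))"
proof -
  interpret P: prob_space M by fact
  note bpos = \<open>beta > 0\<close>
  note Tfin = \<open>finite T\<close> and Tne = \<open>T \<noteq> {}\<close>
  have Lm: "L t j \<in> borel_measurable M" if "t \<in> T" "j \<in> {1..d}" for t j
    using distributed_measurable[OF assms(6)[OF that]] by (simp add: measurable_cong_sets[OF refl sets_lborel])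
  have Um: "U t j \<in> borel_measurable M" if "t \<in> T" "j \<in> {1..d}" for t j
    using distributed_measurable[OF assms(7)[OF that]] by (simp add: measurable_cong_sets[OF refl sets_lborel])
  define a where "a j = beta * LogSumExp T (\<lambda>t. mulo t j / beta)" for j
  define b where "b j = - beta * LogSumExp T (\<lambda>t. - muhi t j / beta)" for j
  define phi where "phi j x = exp (- exp (- (x - a j) / beta)) * exp (- exp ((x - b j) / beta))" for j x
  define G where "G \<omega> s = (\<Prod>j\<in>{1..d}. \<Prod>t\<in>T. (if L t j \<omega> \<le> s j then 1 else 0) * (if s j \<le> U t j \<omega> then 1 else (0::ennreal)))"
    for \<omega> s
  define N where "N = PiM {1..d} (\<lambda>_::nat. lborel::real measure)"
  interpret PS: product_sigma_finite "\<lambda>_::nat. lborel::real measure"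
    by unfold_locales
  interpret PR: pair_sigma_finite M N
    unfolding N_def pair_sigma_finite_def
    using P.sigma_finite_measure_axioms PS.sigma_finite by auto

  have step1: "ennreal (\<Prod>j\<in>{1..d}. max (Min ((\<lambda>t. U t j \<omega>) ` T) - Max ((\<lambda>t. L t j \<omega>) ` T)) 0)
      = (\<integral>\<^sup>+s. G \<omega> s \<partial>N)" for \<omega>
  proof -
    have "ennreal (\<Prod>j\<in>{1..d}. max (Min ((\<lambda>t. U t j \<omega>) ` T) - Max ((\<lambda>t. L t j \<omega>) ` T)) 0)
        = (\<Prod>j\<in>{1..d}. ennreal (max (Min ((\<lambda>t. U t j \<omega>) ` T) - Max ((\<lambda>t. L t j \<omega>) ` T)) 0))"
      by (rule prod_ennreal[symmetric]) simp
    also have "\<dots> = (\<Prod>j\<in>{1..d}. \<integral>\<^sup>+x. (\<Prod>t\<in>T. (if L t j \<omega> \<le> x then 1 else 0) * (if x \<le> U t j \<omega> then 1 else (0::ennreal))) \<partial>lborel)"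
    proof (intro prod.cong refl)
      fix j
      let ?lo = "Max ((\<lambda>t. L t j \<omega>) ` T)" and ?hi = "Min ((\<lambda>t. U t j \<omega>) ` T)"
      have "(\<lambda>x. \<Prod>t\<in>T. (if L t j \<omega> \<le> x then 1 else 0) * (if x \<le> U t j \<omega> then 1 else (0::ennreal)))
          = indicator {?lo..?hi}"
      proof
        fix x
        have "(\<Prod>t\<in>T. (if L t j \<omega> \<le> x then 1 else 0) * (if x \<le> U t j \<omega> then 1 else (0::ennreal)))
            = (\<Prod>t\<in>T. (if L t j \<omega> \<le> x \<and> x \<le> U t j \<omega> then 1 else (0::ennreal)))"
          by (intro prod.cong) auto
        also have "\<dots> = (if \<forall>t\<in>T. L t j \<omega> \<le> x \<and> x \<le> U t j \<omega> then 1 else 0)"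
          by (rule prod_if01[OF Tfin])
        also have "\<dots> = indicator {?lo..?hi} x"
          using Tfin Tne by (auto simp: indicator_def)
        finally show "(\<Prod>t\<in>T. (if L t j \<omega> \<le> x then 1 else 0) * (if x \<le> U t j \<omega> then 1 else (0::ennreal))) = indicator {?lo..?hi} x" .
      qed
      then show "ennreal (max (?hi - ?lo) 0) = \<integral>\<^sup>+x. (\<Prod>t\<in>T. (if L t j \<omega> \<le> x then 1 else 0) * (if x \<le> U t j \<omega> then 1 else (0::ennreal))) \<partial>lborel"
        by (simp add: emeasure_lborel_Icc_eq max_def)
    qed
    also have "\<dots> = (\<integral>\<^sup>+s. G \<omega> s \<partial>N)"
      unfolding G_def N_def by (rule PS.product_nn_integral_prod[symmetric]) auto
    finally show ?thesis .
  qed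
  have Gm: "(\<lambda>(\<omega>, s). G \<omega> s) \<in> borel_measurable (M \<Otimes>\<^sub>M N)"
    unfolding G_def split_beta'
  proof (intro borel_measurable_prod_ennreal)
    fix j t assume j: "j \<in> {1..d}" and t: "t \<in> T"
    note [measurable] = Lm[OF t j] Um[OF t j]
    have [measurable]: "(\<lambda>x. snd x j) \<in> borel_measurable (M \<Otimes>\<^sub>M N)"
      unfolding N_def using j by measurable
    show "(\<lambda>x. (if L t j (fst x) \<le> snd x j then 1 else 0) * (if snd x j \<le> U t j (fst x) then 1 else (0::ennreal)))
        \<in> borel_measurable (M \<Otimes>\<^sub>M N)" by measurable
  qed
  have step4: "(\<integral>\<^sup>+\<omega>. G \<omega> s \<partial>M) = ennreal (\<Prod>j\<in>{1..d}. phi j (s j))" for s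
  proof -
    define I where "I = (T \<times> {1..d}) <+> (T \<times> {1..d})"
    define X where "X = (\<lambda>i::('t \<times> nat) + ('t \<times> nat). case i of Inl (t, j) \<Rightarrow> L t j | Inr (t, j) \<Rightarrow> U t j)"
    define A where "A = (\<lambda>i::('t \<times> nat) + ('t \<times> nat). case i of Inl (t, j) \<Rightarrow> {..s j} | Inr (t, j) \<Rightarrow> {s j..})"
    define E where "E i = X i -` A i \<inter> space M" for i
    define p where "p = (\<lambda>i::('t \<times> nat) + ('t \<times> nat). case i of Inl (t, j) \<Rightarrow> exp (- exp (- (s j - mulo t j) / beta))
                                    | Inr (t, j) \<Rightarrow> exp (- exp ((s j - muhi t j) / beta)))"
    have Ifin: "finite I" unfolding I_def using Tfin by auto
    have Ine: "I \<noteq> {}" unfolding I_def using Tne \<open>d \<ge> 1\<close> by auto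
    have indep: "P.indep_sets (\<lambda>i. {X i -` B \<inter> space M | B. B \<in> sets borel}) I"
      using assms(8) unfolding P.indep_vars_def2 X_def I_def by (rule conjunct2)
    have rv: "\<forall>i\<in>I. X i \<in> borel_measurable M"
      using assms(8) unfolding P.indep_vars_def2 X_def I_def by (rule conjunct1)
    have EF: "\<forall>i\<in>I. E i \<in> {X i -` B \<inter> space M | B. B \<in> sets borel}"
    proof
      fix i assume "i \<in> I"
      have "A i \<in> sets borel" unfolding A_def by (auto split: sum.split)
      then show "E i \<in> {X i -` B \<inter> space M | B. B \<in> sets borel}" unfolding E_def by blast
    qed
    have Esets: "E i \<in> sets M" if "i \<in> I" for i
    proof -
      have "A i \<in> sets borel" unfolding A_def by (auto split: sum.split)
      then show ?thesis unfolding E_def using rv that by (intro measurable_sets) auto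
    qed
    have Ip: "P.prob (E i) = p i" if i: "i \<in> I" for i
    proof (cases i)
      case (Inl tj)
      then obtain t j where tj: "i = Inl (t, j)" by (cases tj) auto
      with i have t: "t \<in> T" and j: "j \<in> {1..d}" unfolding I_def by auto
      have "emeasure M (E i) = ennreal (exp (- exp (- (s j - mulo t j) / beta)))"
        unfolding E_def X_def A_def tj
        using distributed_emeasure[OF assms(6)[OF t j], of "{..s j}"] maxgumbel_cdf[OF bpos] by simp
      then show ?thesis unfolding P.emeasure_eq_measure p_def tj by simp
    next
      case (Inr tj)
      then obtain t j where tj: "i = Inr (t, j)" by (cases tj) auto
      with i have t: "t \<in> T" and j: "j \<in> {1..d}" unfolding I_def by auto
      have "emeasure M (E i) = ennreal (exp (- exp ((s j - muhi t j) / beta)))"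
        unfolding E_def X_def A_def tj
        using distributed_emeasure[OF assms(7)[OF t j], of "{s j..}"] mingumbel_tail[OF bpos] by simp
      then show ?thesis unfolding P.emeasure_eq_measure p_def tj by simp
    qed
    have "(\<integral>\<^sup>+\<omega>. G \<omega> s \<partial>M) = (\<integral>\<^sup>+\<omega>. indicator (\<Inter>i\<in>I. E i) \<omega> \<partial>M)"
    proof (intro nn_integral_cong)
      fix \<omega> assume \<omega>: "\<omega> \<in> space M"
      have "G \<omega> s = (\<Prod>j\<in>{1..d}. \<Prod>t\<in>T. (if L t j \<omega> \<le> s j \<and> s j \<le> U t j \<omega> then 1 else (0::ennreal)))"
        unfolding G_def by (intro prod.cong) auto
      also have "\<dots> = (\<Prod>j\<in>{1..d}. (if \<forall>t\<in>T. L t j \<omega> \<le> s j \<and> s j \<le> U t j \<omega> then 1 else (0::ennreal)))"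
        by (intro prod.cong refl prod_if01[OF Tfin])
      also have "\<dots> = (if \<forall>j\<in>{1..d}. \<forall>t\<in>T. L t j \<omega> \<le> s j \<and> s j \<le> U t j \<omega> then 1 else (0::ennreal))"
        by (rule prod_if01) simp
      also have "\<dots> = indicator (\<Inter>i\<in>I. E i) \<omega>"
      proof -
        have "\<omega> \<in> (\<Inter>i\<in>I. E i) \<longleftrightarrow> (\<forall>i\<in>I. \<omega> \<in> E i)" by simp
        also have "\<dots> \<longleftrightarrow> (\<forall>j\<in>{1..d}. \<forall>t\<in>T. L t j \<omega> \<le> s j \<and> s j \<le> U t j \<omega>)"
          unfolding I_def Ball_Plus_prod using \<omega> by (simp add: E_def X_def A_def)
        finally show ?thesis by (simp add: indicator_def)
      qed
      finally show "G \<omega> s = indicator (\<Inter>i\<in>I. E i) \<omega>" .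
    qed
    also have "\<dots> = emeasure M (\<Inter>i\<in>I. E i)"
      using Esets Ifin Ine by (intro nn_integral_indicator) auto
    also have "\<dots> = ennreal (P.prob (\<Inter>i\<in>I. E i))" by (rule P.emeasure_eq_measure)
    also have "P.prob (\<Inter>i\<in>I. E i) = (\<Prod>i\<in>I. P.prob (E i))"
      using P.indep_setsD[OF indep order.refl Ine Ifin EF] .
    also have "\<dots> = (\<Prod>i\<in>I. p i)" using Ip by (rule prod.cong[OF refl])
    also have "\<dots> = (\<Prod>j\<in>{1..d}. phi j (s j))"
    proof -
      have "(\<Prod>i\<in>I. p i) = (\<Prod>z\<in>T \<times> {1..d}. p (Inl z)) * (\<Prod>z\<in>T \<times> {1..d}. p (Inr z))"
        unfolding I_def using Tfin by (subst prod.Plus) (auto simp: o_def)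
      also have "(\<Prod>z\<in>T \<times> {1..d}. p (Inl z)) = (\<Prod>j\<in>{1..d}. \<Prod>t\<in>T. exp (- exp (- (s j - mulo t j) / beta)))"
      proof -
        have "(\<Prod>z\<in>T \<times> {1..d}. p (Inl z)) = (\<Prod>z\<in>T \<times> {1..d}. case z of (t, j) \<Rightarrow> exp (- exp (- (s j - mulo t j) / beta)))"
          unfolding p_def by (intro prod.cong) auto
        also have "\<dots> = (\<Prod>t\<in>T. \<Prod>j\<in>{1..d}. exp (- exp (- (s j - mulo t j) / beta)))"
          by (rule prod.cartesian_product[symmetric])
        also have "\<dots> = (\<Prod>j\<in>{1..d}. \<Prod>t\<in>T. exp (- exp (- (s j - mulo t j) / beta)))"
          by (rule prod.swap)
        finally show ?thesis .
      qed
      also have "(\<Prod>z\<in>T \<times> {1..d}. p (Inr z)) = (\<Prod>j\<in>{1..d}. \<Prod>t\<in>T. exp (- exp ((s j - muhi t j) / beta)))"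
      proof -
        have "(\<Prod>z\<in>T \<times> {1..d}. p (Inr z)) = (\<Prod>z\<in>T \<times> {1..d}. case z of (t, j) \<Rightarrow> exp (- exp ((s j - muhi t j) / beta)))"
          unfolding p_def by (intro prod.cong) auto
        also have "\<dots> = (\<Prod>t\<in>T. \<Prod>j\<in>{1..d}. exp (- exp ((s j - muhi t j) / beta)))"
          by (rule prod.cartesian_product[symmetric])
        also have "\<dots> = (\<Prod>j\<in>{1..d}. \<Prod>t\<in>T. exp (- exp ((s j - muhi t j) / beta)))"
          by (rule prod.swap)
        finally show ?thesis .
      qed
      also have "(\<Prod>j\<in>{1..d}. \<Prod>t\<in>T. exp (- exp (- (s j - mulo t j) / beta))) *
                 (\<Prod>j\<in>{1..d}. \<Prod>t\<in>T. exp (- exp ((s j - muhi t j) / beta)))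
               = (\<Prod>j\<in>{1..d}. phi j (s j))"
      proof -
        have pj: "(\<Prod>t\<in>T. exp (- exp (- (s j - mulo t j) / beta))) * (\<Prod>t\<in>T. exp (- exp ((s j - muhi t j) / beta)))
            = phi j (s j)" for j
          unfolding phi_def a_def b_def
          using prod_maxg[OF Tfin Tne bpos, of "s j" "\<lambda>t. mulo t j"] prod_ming[OF Tfin Tne bpos, of "s j" "\<lambda>t. muhi t j"]
          by simp
        have "(\<Prod>j\<in>{1..d}. \<Prod>t\<in>T. exp (- exp (- (s j - mulo t j) / beta))) *
                 (\<Prod>j\<in>{1..d}. \<Prod>t\<in>T. exp (- exp ((s j - muhi t j) / beta)))
          = (\<Prod>j\<in>{1..d}. (\<Prod>t\<in>T. exp (- exp (- (s j - mulo t j) / beta))) * (\<Prod>t\<in>T. exp (- exp ((s j - muhi t j) / beta))))"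
          by (rule prod.distrib[symmetric])
        then show ?thesis by (simp only: pj)
      qed
      finally show ?thesis .
    qed
    finally show ?thesis .
  qed
  have phi_nn: "0 \<le> phi j x" for j x unfolding phi_def by simp
  have phim: "phi j \<in> borel_measurable borel" for j unfolding phi_def by measurable
  have "(\<integral>\<^sup>+ \<omega>. ennreal (\<Prod>j\<in>{1..d}.
             max (Min ((\<lambda>t. U t j \<omega>) ` T) - Max ((\<lambda>t. L t j \<omega>) ` T)) 0) \<partial>M)
      = (\<integral>\<^sup>+ \<omega>. (\<integral>\<^sup>+s. G \<omega> s \<partial>N) \<partial>M)"
    by (simp only: step1)
  also have "\<dots> = (\<integral>\<^sup>+s. (\<integral>\<^sup>+ \<omega>. G \<omega> s \<partial>M) \<partial>N)"
    by (rule PR.Fubini'[OF Gm, symmetric])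
  also have "\<dots> = (\<integral>\<^sup>+s. (\<Prod>j\<in>{1..d}. ennreal (phi j (s j))) \<partial>N)"
    by (simp add: step4 prod_ennreal phi_nn)
  also have "\<dots> = (\<Prod>j\<in>{1..d}. \<integral>\<^sup>+x. ennreal (phi j x) \<partial>lborel)"
    unfolding N_def using phim by (intro PS.product_nn_integral_prod) auto
  also have "\<dots> = (\<Prod>j\<in>{1..d}. ennreal (gumbel_box_m beta (b j - a j)))"
    unfolding phi_def by (intro prod.cong refl box_integral bpos)
  also have "\<dots> = ennreal (\<Prod>j\<in>{1..d}. gumbel_box_m beta (b j - a j))"
    by (rule prod_ennreal) (use bpos BesselK0_nonneg in \<open>simp add: gumbel_box_m_def\<close>)
  also have "(\<Prod>j\<in>{1..d}. gumbel_box_m beta (b j - a j)) = (\<Prod>j\<in>{1..d}. gumbel_box_m beta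
             (- beta * LogSumExp T (\<lambda>t. - muhi t j / beta)
              - beta * LogSumExp T (\<lambda>t. mulo t j / beta)))"
    by (simp add: a_def b_def)
  finally show ?thesis .
qed
end
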